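(* Let $q>1$ and $0<u<1$. Choose $\lambda'_1=a\ge1$ with probability \[ Q(a)=\frac{\prod_{r\ge1}(1-u/q^r)\,u^{a-1}}{q^{a^2-a}(\frac uq)_a(\frac1q)_{a-1}}, \] and then define $\lambda'_2,\lambda'_3,\dots$ successively by the Markov rule that if $\lambda'_i=a$ then $\lambda'_{i+1}=b$ ($0\le b\le a$) with probability \[ K(a,b)=\frac{u^b(\frac1q)_a(\frac uq)_a}{q^{b^2}(\frac1q)_{a-b}(\frac1q)_b(\frac uq)_b}. \] Then the partition with conjugate $(\lambda'_1,\lambda'_2,\dots)$ is distributed according to $N_{u,q}$.
   Context: $(x)_i=\prod_{j=1}^i(1-x^j)$ with $(x)_0=1$; in particular $(\frac uq)_i=\prod_{j=1}^i(1-u/q^j)$. $N_{u,q}(\lambda)=\prod_{r\ge1}(1-u/q^r)\frac{u^{|\lambda|-1}(q^{\lambda'_1}-1)}{\prod_i q^{(\lambda'_i)^2}(\frac1q)_{m_i(\lambda)}}$ for partitions $\lambda$ of positive integers, where $\lambda'$ is the conjugate partition and $m_i(\lambda)$ the multiplicity of part $i$. *)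

theory Defs
  imports "HOL-Analysis.Analysis"
begin

definition is_partition :: "nat list \<Rightarrow> bool" where
  "is_partition lam \<longleftrightarrow> sorted_wrt (\<ge>) lam \<and> 0 \<notin> set lam"

definition conj_part :: "nat list \<Rightarrow> nat list" where
  "conj_part lam = map (\<lambda>i. length (filter (\<lambda>p. i \<le> p) lam)) [1..<Max (insert 0 (set lam)) + 1]"

text \<open>poch x q i = prod_{j=1}^i (1 - x/q^j); so (u/q)_i = poch u q i and (1/q)_i = poch 1 q i.\<close>
definition poch :: "real \<Rightarrow> real \<Rightarrow> nat \<Rightarrow> real" where
  "poch x q i = (\<Prod>j\<in>{1..i}. 1 - x / q ^ j)"

definition Pinf :: "real \<Rightarrow> real \<Rightarrow> real" where
  "Pinf u q = prodinf (\<lambda>r. 1 - u / q ^ Suc r)"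

definition N_uq :: "real \<Rightarrow> real \<Rightarrow> nat list \<Rightarrow> real" where
  "N_uq u q lam =
     Pinf u q * u ^ (sum_list lam - 1) * (q ^ (conj_part lam ! 0) - 1) /
     (\<Prod>i\<in>{1..length (conj_part lam)}.
        q ^ ((conj_part lam ! (i - 1))\<^sup>2) * poch 1 q (count_list lam i))"

definition Qstart :: "real \<Rightarrow> real \<Rightarrow> nat \<Rightarrow> real" where
  "Qstart u q a = Pinf u q * u ^ (a - 1) / (q ^ (a\<^sup>2 - a) * poch u q a * poch 1 q (a - 1))"

definition Ktrans :: "real \<Rightarrow> real \<Rightarrow> nat \<Rightarrow> nat \<Rightarrow> real" where
  "Ktrans u q a b = u ^ b * poch 1 q a * poch u q a /
     (q ^ (b\<^sup>2) * poch 1 q (a - b) * poch 1 q b * poch u q b)"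

text \<open>Probability that the Markov chain (start Q, transitions K) produces the sequence
  c_1, ..., c_k, 0, 0, ...  (once at 0 it stays at 0, since K(0,0) = 1).\<close>
definition chain_prob :: "real \<Rightarrow> real \<Rightarrow> nat list \<Rightarrow> real" where
  "chain_prob u q c = Qstart u q (c ! 0) *
     (\<Prod>i<length c. Ktrans u q (c ! i) ((c @ [0]) ! Suc i))"

end

theory Submission
  imports Defs
begin

definition fK :: "real \<Rightarrow> real \<Rightarrow> nat list \<Rightarrow> real" where
  "fK u q c = (\<Prod>i<length c. Ktrans u q (c ! i) ((c @ [0]) ! Suc i))"

definition PP :: "real \<Rightarrow> nat list \<Rightarrow> real" where
  "PP q c = (\<Prod>i<length c. poch 1 q (c ! i - (c @ [0]) ! Suc i))"

lemma poch_nz: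
  assumes "q > 1" "x \<le> 1" shows "poch x q n \<noteq> 0"
proof -
  have "\<And>j. j \<in> {1..n} \<Longrightarrow> 1 - x / q ^ j \<noteq> 0"
  proof -
    fix j :: nat assume "j \<in> {1..n}"
    hence "q ^ j > 1" using assms by (simp add: one_less_power)
    hence "x / q ^ j < 1" using assms by (simp add: divide_less_eq)
    thus "1 - x / q ^ j \<noteq> 0" by linarith
  qed
  thus ?thesis unfolding poch_def by (metis (lifting) finite_atLeastAtMost prod_zero_iff)
qed

lemma poch_0[simp]: "poch x q 0 = 1" by (simp add: poch_def)

lemma poch_Suc: "poch x q (Suc n) = poch x q n * (1 - x / q ^ Suc n)"
  by (simp add: poch_def)

lemma fK_main:
  assumes "q > 1" "u \<le> 1"
  shows "fK u q c * q ^ sum_list (map (\<lambda>x. x\<^sup>2) (tl c)) * PP q c =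
         u ^ sum_list (tl c) * poch 1 q ((c @ [0]) ! 0) * poch u q ((c @ [0]) ! 0)"
proof (induction c)
  case Nil
  then show ?case by (simp add: fK_def PP_def)
next
  case (Cons a c)
  define b where "b = (c @ [0]) ! 0"
  have f: "fK u q (a # c) = Ktrans u q a b * fK u q c"
    unfolding fK_def b_def by (simp del: prod.lessThan_Suc add: prod.lessThan_Suc_shift)
  have p: "PP q (a # c) = poch 1 q (a - b) * PP q c"
    unfolding PP_def b_def by (simp del: prod.lessThan_Suc add: prod.lessThan_Suc_shift)
  have s1: "sum_list c = b + sum_list (tl c)" unfolding b_def by (cases c) auto
  have s2: "sum_list (map (\<lambda>x. x\<^sup>2) c) = b\<^sup>2 + sum_list (map (\<lambda>x. x\<^sup>2) (tl c))"
    unfolding b_def by (cases c) auto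
  have nz: "poch 1 q n \<noteq> 0" "poch u q n \<noteq> 0" for n using poch_nz assms by auto
  have qn: "q ^ n \<noteq> 0" for n using assms by simp
  have "q \<noteq> 0" using assms by simp
  have K: "Ktrans u q a b * q ^ (b\<^sup>2) * poch 1 q (a - b) * poch 1 q b * poch u q b
      = u ^ b * poch 1 q a * poch u q a"
    unfolding Ktrans_def using nz qn assms by (simp add: field_simps)
  have IH: "fK u q c * q ^ sum_list (map (\<lambda>x. x\<^sup>2) (tl c)) * PP q c =
         u ^ sum_list (tl c) * poch 1 q b * poch u q b" using Cons.IH b_def by simp
  have "fK u q (a # c) * q ^ sum_list (map (\<lambda>x. x\<^sup>2) (tl (a # c))) * PP q (a # c)
     = (Ktrans u q a b * q ^ (b\<^sup>2) * poch 1 q (a - b)) *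
       (fK u q c * q ^ sum_list (map (\<lambda>x. x\<^sup>2) (tl c)) * PP q c)"
    using f p s2 by (simp add: power_add)
  also have "\<dots> = (Ktrans u q a b * q ^ (b\<^sup>2) * poch 1 q (a - b)) *
       (u ^ sum_list (tl c) * poch 1 q b * poch u q b)" using IH by simp
  also have "\<dots> = (Ktrans u q a b * q ^ (b\<^sup>2) * poch 1 q (a - b) * poch 1 q b * poch u q b)
       * u ^ sum_list (tl c)" by (simp add: algebra_simps)
  also have "\<dots> = u ^ sum_list c * poch 1 q a * poch u q a"
    using K s1 by (simp add: power_add algebra_simps)
  finally show ?case by simp
qed

lemma filter_count:
  "length (filter (\<lambda>p. i \<le> p) xs) = length (filter (\<lambda>p. Suc i \<le> p) xs) + count_list xs i"
  by (induction xs) auto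

lemma sum_filter:
  assumes "\<forall>p\<in>set xs. p \<le> M"
  shows "(\<Sum>i\<in>{1..M}. length (filter (\<lambda>p. i \<le> p) xs)) = sum_list xs"
  using assms
proof (induction xs)
  case Nil then show ?case by simp
next
  case (Cons x xs)
  have "(\<Sum>i\<in>{1..M}. length (filter (\<lambda>p. i \<le> p) (x # xs)))
      = (\<Sum>i\<in>{1..M}. (if i \<le> x then 1 else 0)) + (\<Sum>i\<in>{1..M}. length (filter (\<lambda>p. i \<le> p) xs))"
    by (auto simp add: sum.distrib[symmetric] intro!: sum.cong)
  also have "(\<Sum>i\<in>{1..M}. (if i \<le> x then 1 else 0::nat)) = card ({1..M} \<inter> {i. i \<le> x})"
    by (simp add: sum.If_cases)
  also have "{1..M} \<inter> {i. i \<le> x} = {1..x}" using Cons.prems by auto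
  finally show ?case using Cons by simp
qed

theorem theorem3p7:
  fixes u q :: real and lam :: "nat list"
  assumes "q > 1" and "0 < u" and "u < 1"
    and "is_partition lam" and "lam \<noteq> []"
  shows "chain_prob u q (conj_part lam) = N_uq u q lam"
proof -
  define M where "M = Max (set lam)"
  define g where "g i = length (filter (\<lambda>p. i \<le> p) lam)" for i
  define c where "c = conj_part lam"
  have pos: "\<forall>p\<in>set lam. 0 < p" using assms(4) unfolding is_partition_def by (metis gr0I)
  have leM: "\<forall>p\<in>set lam. p \<le> M" unfolding M_def by simp
  have MI: "Max (insert 0 (set lam)) = M" unfolding M_def using assms(5) by simp
  have cdef: "c = map g [1..<M+1]" unfolding c_def conj_part_def MI g_def by simp
  have M1: "M \<ge> 1" using pos assms(5) leM by (metis One_nat_def Suc_leI le_trans list.set_sel(1))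
  have lenc: "length c = M" using cdef by simp
  have cnth: "i < M \<Longrightarrow> c ! i = g (Suc i)" for i using cdef by (simp del: upt_Suc)
  have gM: "g (Suc M) = 0" unfolding g_def using leM
    by (simp add: filter_empty_conv not_less_eq_eq)
  have cz: "i \<le> M \<Longrightarrow> (c @ [0]) ! i = g (Suc i)" for i
    using cnth gM lenc by (cases "i < M") (auto simp: nth_append)
  have diff: "i < M \<Longrightarrow> c ! i - (c @ [0]) ! Suc i = count_list lam (Suc i)" for i
    using cnth cz[of "Suc i"] filter_count[of "Suc i" lam] unfolding g_def by simp
  define A where "A = c ! 0"
  have A: "A = length lam" unfolding A_def using cnth[of 0] M1 pos unfolding g_def
    by (simp add: Suc_le_eq filter_True)
  have A1: "A \<ge> 1" using A assms(5) by (simp add: Suc_le_eq)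
  have c0: "(c @ [0]) ! 0 = A" unfolding A_def using lenc M1 by (simp add: nth_append)
  have sumc: "sum_list c = sum_list lam"
  proof -
    have "sum_list c = sum g (set [1..<M+1])" unfolding cdef by (simp only: sum_set_upt_conv_sum_list_nat)
    also have "set [1..<M+1] = {1..M}" by auto
    finally show ?thesis using sum_filter[OF leM] unfolding g_def by simp
  qed
  have cne: "c \<noteq> []" using lenc M1 by auto
  hence cc: "c = A # tl c" unfolding A_def by (cases c) auto
  have sumc2: "sum_list lam = A + sum_list (tl c)" using sumc cc by (metis sum_list.Cons)
  have sq2: "sum_list (map (\<lambda>x. x\<^sup>2) c) = A\<^sup>2 + sum_list (map (\<lambda>x. x\<^sup>2) (tl c))"
    using cc by (metis list.map(2) sum_list.Cons)
  have sqsum: "sum_list (map (\<lambda>x. x\<^sup>2) c) = (\<Sum>i<M. (c ! i)\<^sup>2)"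
    by (simp add: sum_list_sum_nth lenc atLeast0LessThan)
  have prodN: "(\<Prod>i\<in>{1..length c}. q ^ ((c ! (i - 1))\<^sup>2) * poch 1 q (count_list lam i))
      = q ^ sum_list (map (\<lambda>x. x\<^sup>2) c) * PP q c"
  proof -
    have "(\<Prod>i\<in>{1..length c}. q ^ ((c ! (i - 1))\<^sup>2) * poch 1 q (count_list lam i))
       = (\<Prod>i<M. q ^ ((c ! i)\<^sup>2) * poch 1 q (count_list lam (Suc i)))"
      using lenc by (simp add: prod.atLeast1_atMost_eq)
    also have "\<dots> = (\<Prod>i<M. q ^ ((c ! i)\<^sup>2)) * (\<Prod>i<M. poch 1 q (count_list lam (Suc i)))"
      by (simp add: prod.distrib)
    also have "(\<Prod>i<M. q ^ ((c ! i)\<^sup>2)) = q ^ sum_list (map (\<lambda>x. x\<^sup>2) c)"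
      by (simp add: sqsum power_sum)
    also have "(\<Prod>i<M. poch 1 q (count_list lam (Suc i))) = PP q c"
      unfolding PP_def lenc using diff by (intro prod.cong) auto
    finally show ?thesis .
  qed
  have nz: "poch 1 q n \<noteq> 0" "poch u q n \<noteq> 0" for n using poch_nz assms by auto
  have PPnz: "PP q c \<noteq> 0" unfolding PP_def using nz by simp
  have qn: "q ^ n \<noteq> 0" for n using assms by simp
  have "q \<noteq> 0" using assms by simp
  obtain k where k: "A = Suc k" using A1 by (cases A) auto
  have fk: "fK u q c * q ^ sum_list (map (\<lambda>x. x\<^sup>2) (tl c)) * PP q c =
         u ^ sum_list (tl c) * (poch 1 q k * (1 - 1 / q ^ A)) * poch u q A"
    using fK_main[of q u c] assms c0 k poch_Suc[of 1 q k] by simp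
  hence fk': "fK u q c = u ^ sum_list (tl c) * (poch 1 q k * (1 - 1 / q ^ A)) * poch u q A
      / (q ^ sum_list (map (\<lambda>x. x\<^sup>2) (tl c)) * PP q c)"
    using PPnz qn by (simp add: field_simps)
  have qA: "q ^ (A\<^sup>2) = q ^ (A\<^sup>2 - A) * q ^ A"
    by (simp add: power_add[symmetric] power2_eq_square)
  have lhs: "chain_prob u q c = Qstart u q A * fK u q c"
    unfolding chain_prob_def fK_def A_def by simp
  show ?thesis
    unfolding c_def[symmetric] lhs N_uq_def prodN A_def[symmetric] sumc2 fk' Qstart_def sq2
    using nz qn PPnz k qA assms(1) \<open>q \<noteq> 0\<close>
    by (simp add: field_simps power_add)
qed

end
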